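(* For every $\alpha<1$ and $\lambda>0$ we have $\mathbb P_{\alpha,\lambda}(\text{percolation})=1$.
   Context: For a countable set $P\subseteq\mathbb R\times[0,\infty)$, $\Gamma(P)$ denotes the graph on vertex set $P$ in which distinct points $(x,y),(x',y')$ are adjacent iff $|x-x'|<e^{\frac12(y+y')}$. For $\alpha,\lambda>0$, $\mathcal P_{\alpha,\lambda}$ is a Poisson point process on $\mathbb R\times[0,\infty)$ with intensity function $\lambda e^{-\alpha y}$, $\mathbb P_{\alpha,\lambda}$ its law, and "percolation" is the event that $\Gamma(\mathcal P_{\alpha,\lambda})$ has an infinite connected component. *)

theory Defs
  imports "HOL-Probability.Probability"
begin

definition gamma_adj :: "(real \<times> real) set \<Rightarrow> real \<times> real \<Rightarrow> real \<times> real \<Rightarrow> bool" where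
  "gamma_adj P p q \<longleftrightarrow> p \<in> P \<and> q \<in> P \<and> p \<noteq> q \<and>
     \<bar>fst p - fst q\<bar> < exp ((snd p + snd q) / 2)"

definition gamma_component :: "(real \<times> real) set \<Rightarrow> real \<times> real \<Rightarrow> (real \<times> real) set" where
  "gamma_component P p = {q. (gamma_adj P)\<^sup>*\<^sup>* p q}"

definition percolates :: "(real \<times> real) set \<Rightarrow> bool" where
  "percolates P \<longleftrightarrow> (\<exists>p\<in>P. infinite (gamma_component P p))"

definition ppp_mean :: "real \<Rightarrow> real \<Rightarrow> (real \<times> real) set \<Rightarrow> ennreal" where
  "ppp_mean alpha lam B =
     (\<integral>\<^sup>+ z. indicator (B \<inter> (UNIV \<times> {0..})) z * ennreal (lam * exp (- alpha * snd z)) \<partial>lborel)"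

definition poisson_point_process ::
  "'a measure \<Rightarrow> real \<Rightarrow> real \<Rightarrow> ('a \<Rightarrow> (real \<times> real) set) \<Rightarrow> bool" where
  "poisson_point_process M alpha lam N \<longleftrightarrow>
     prob_space M \<and>
     (\<forall>\<omega>\<in>space M. N \<omega> \<subseteq> UNIV \<times> {0..}) \<and>
     (\<forall>(Bs :: (real \<times> real) set list) (ks :: nat list).
        length ks = length Bs \<and>
        (\<forall>B\<in>set Bs. B \<in> sets borel \<and> B \<subseteq> UNIV \<times> {0..} \<and> ppp_mean alpha lam B < \<infinity>) \<and>
        disjoint_family_on (\<lambda>i. Bs ! i) {..<length Bs} \<longrightarrow>
        (let E = {\<omega>\<in>space M. \<forall>i<length Bs. finite (N \<omega> \<inter> Bs ! i) \<and> card (N \<omega> \<inter> Bs ! i) = ks ! i}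
         in E \<in> sets M \<and>
            measure M E = (\<Prod>i<length Bs.
               let m = enn2real (ppp_mean alpha lam (Bs ! i))
               in exp (- m) * m ^ (ks ! i) / fact (ks ! i))))"

end

theory Submission imports Defs begin

definition BX :: "nat \<Rightarrow> (real \<times> real) set" where
  "BX n = cbox (0::real, real n) (exp (real n - 1), real n + 1)"

lemma BX_mem: "p \<in> BX n \<longleftrightarrow> 0 \<le> fst p \<and> fst p \<le> exp (real n - 1) \<and> real n \<le> snd p \<and> snd p \<le> real n + 1"
  by (cases p) (auto simp: BX_def cbox_Pair_eq)

lemma box_meas: "emeasure lborel (BX n) = ennreal (exp (real n - 1))"
  unfolding BX_def by (simp add: emeasure_lborel_cbox_eq Basis_prod_def inner_prod_def)

lemma perc:
  assumes "\<forall>n\<ge>n0. p n \<in> P \<inter> BX n"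
  shows "percolates P"
proof -
  have stp: "(gamma_adj P)\<^sup>*\<^sup>* (p n) (p (Suc n))" if "n \<ge> n0" for n
  proof (cases "p n = p (Suc n)")
    case False
    have a: "p n \<in> P" "p n \<in> BX n" "p (Suc n) \<in> P" "p (Suc n) \<in> BX (Suc n)" using assms that by auto
    have "\<bar>fst (p n) - fst (p (Suc n))\<bar> \<le> exp (real n)"
    proof -
      have e: "exp (real n - 1) \<le> exp (real n)" by simp
      have f: "0 \<le> fst (p n)" "fst (p n) \<le> exp (real n - 1)" "0 \<le> fst (p (Suc n))" "fst (p (Suc n)) \<le> exp (real n)"
        using a(2,4) unfolding BX_mem by auto
      show ?thesis using f e by (simp only: abs_le_iff) linarith
    qed
    also have "\<dots> < exp (real n + 1/2)" by simp
    also have "\<dots> \<le> exp ((snd (p n) + snd (p (Suc n))) / 2)"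
      using a(2,4) unfolding BX_mem by auto
    finally have "gamma_adj P (p n) (p (Suc n))" using a False unfolding gamma_adj_def by auto
    then show ?thesis by auto
  qed auto
  have chain: "(gamma_adj P)\<^sup>*\<^sup>* (p n0) (p n)" if "n \<ge> n0" for n
    using that
  proof (induction n rule: dec_induct)
    case (step m)
    then show ?case using stp[of m] by (meson rtranclp_trans)
  qed auto
  have sub: "p ` {n0..} \<subseteq> gamma_component P (p n0)"
    using chain by (auto simp: gamma_component_def)
  have "infinite (p ` {n0..})"
  proof
    assume f: "finite (p ` {n0..})"
    then have "finite (snd ` p ` {n0..})" by auto
    then obtain b where b: "\<forall>x\<in>snd ` p ` {n0..}. x \<le> b"
      using bdd_finite(1) unfolding bdd_above_def by blast
    define m where "m = max n0 (nat \<lceil>b\<rceil> + 1)"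
    have "m \<ge> n0" by (simp add: m_def)
    then have "snd (p m) \<le> b" using b by auto
    moreover have "real m \<le> snd (p m)" using assms \<open>m \<ge> n0\<close> BX_mem by blast
    moreover have "real m > b" unfolding m_def by linarith
    ultimately show False by linarith
  qed
  then have "infinite (gamma_component P (p n0))" using sub finite_subset by blast
  moreover have "p n0 \<in> P" using assms by auto
  ultimately show ?thesis unfolding percolates_def by blast
qed

lemma mean_bounds:
  fixes alpha lam :: real
  assumes "0 < alpha" "0 < lam"
  shows "ennreal (lam * exp (- alpha * (real n + 1)) * exp (real n - 1)) \<le> ppp_mean alpha lam (BX n)"
    and "ppp_mean alpha lam (BX n) \<le> ennreal (lam * exp (real n - 1))"
proof -
  have BXs: "BX n \<inter> (UNIV \<times> {0..}) = BX n" unfolding BX_mem by (auto simp: BX_mem)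
  have [measurable]: "BX n \<in> sets lborel" unfolding BX_def by simp
  have "ennreal (lam * exp (- alpha * (real n + 1)) * exp (real n - 1))
      = (\<integral>\<^sup>+ z. ennreal (lam * exp (- alpha * (real n + 1))) * indicator (BX n) z \<partial>lborel)"
    by (simp only: nn_integral_cmult_indicator[OF \<open>BX n \<in> sets lborel\<close>] box_meas)
       (subst ennreal_mult[symmetric], use assms in auto)
  also have "\<dots> \<le> ppp_mean alpha lam (BX n)"
    unfolding ppp_mean_def BXs
    apply (rule nn_integral_mono)
    using assms by (auto simp: indicator_def BX_mem intro!: ennreal_leI mult_left_mono)
  finally show "ennreal (lam * exp (- alpha * (real n + 1)) * exp (real n - 1)) \<le> ppp_mean alpha lam (BX n)" .
  have "ppp_mean alpha lam (BX n) \<le> (\<integral>\<^sup>+ z. ennreal lam * indicator (BX n) z \<partial>lborel)"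
    unfolding ppp_mean_def BXs
    apply (rule nn_integral_mono)
    apply (auto simp: indicator_def BX_mem intro!: ennreal_leI)
    using assms by (simp add: mult_le_cancel_left1 mult_nonneg_nonneg)
  also have "\<dots> = ennreal (lam * exp (real n - 1))"
    by (simp only: nn_integral_cmult_indicator[OF \<open>BX n \<in> sets lborel\<close>] box_meas)
       (subst ennreal_mult, use assms in auto)
  finally show "ppp_mean alpha lam (BX n) \<le> ennreal (lam * exp (real n - 1))" .
qed
theorem lemma2p11:
  fixes alpha lam :: real
    and M :: "'a measure"
    and N :: "'a \<Rightarrow> (real \<times> real) set"
  assumes "0 < alpha" and "alpha < 1" and "0 < lam"
    and "poisson_point_process M alpha lam N"
  shows "AE \<omega> in M. percolates (N \<omega>)"
proof -
  note ppp = assms(4)[unfolded poisson_point_process_def]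
  interpret prob_space M using ppp by blast
  define E where "E n = {\<omega>\<in>space M. finite (N \<omega> \<inter> BX n) \<and> card (N \<omega> \<inter> BX n) = 0}" for n
  define L where "L n = lam * exp (- alpha * (real n + 1)) * exp (real n - 1)" for n
  have EL: "E n \<in> sets M \<and> measure M (E n) \<le> exp (- L n)" for n
  proof -
    have fin: "ppp_mean alpha lam (BX n) < \<infinity>"
      using mean_bounds(2)[OF assms(1,3), of n] by (simp add: le_less_trans)
    have sub: "BX n \<subseteq> UNIV \<times> {0..}" by (auto simp: BX_mem)
    have bor: "BX n \<in> sets borel" unfolding BX_def by simp
    have "let E = {\<omega>\<in>space M. \<forall>i<length [BX n]. finite (N \<omega> \<inter> [BX n] ! i) \<and> card (N \<omega> \<inter> [BX n] ! i) = [0::nat] ! i}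
         in E \<in> sets M \<and>
            measure M E = (\<Prod>i<length [BX n].
               let m = enn2real (ppp_mean alpha lam ([BX n] ! i))
               in exp (- m) * m ^ ([0::nat] ! i) / fact ([0::nat] ! i))"
      apply (rule ppp[THEN conjunct2, THEN conjunct2, rule_format, where Bs="[BX n]" and ks="[0]"])
      using fin sub bor by (auto simp: disjoint_family_on_def)
    moreover have "{\<omega>\<in>space M. \<forall>i<length [BX n]. finite (N \<omega> \<inter> [BX n] ! i) \<and> card (N \<omega> \<inter> [BX n] ! i) = [0::nat] ! i} = E n"
      unfolding E_def by auto
    ultimately have 1: "E n \<in> sets M" and 2: "measure M (E n) = exp (- enn2real (ppp_mean alpha lam (BX n)))"
      by (simp_all add: Let_def)
    have "L n \<le> enn2real (ppp_mean alpha lam (BX n))"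
    proof -
      have "enn2real (ennreal (L n)) \<le> enn2real (ppp_mean alpha lam (BX n))"
        using mean_bounds(1)[OF assms(1,3), of n] fin unfolding L_def by (intro enn2real_mono) auto
      moreover have "L n \<ge> 0" unfolding L_def using assms by auto
      ultimately show ?thesis by simp
    qed
    then show ?thesis using 1 2 by simp
  qed
  define c where "c = lam * exp (- alpha - 1)"
  define d where "d = 1 - alpha"
  have c: "c > 0" and d: "d > 0" using assms by (auto simp: c_def d_def)
  have Lc: "L n = c * exp (d * real n)" for n
    unfolding L_def c_def d_def by (simp add: mult.assoc exp_add[symmetric] algebra_simps)
  have bound: "exp (- L n) \<le> exp (- (c * d)) ^ n" for n
  proof -
    have "d * real n \<le> exp (d * real n)"
      using exp_ge_add_one_self[of "d * real n"] by linarith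
    then have "c * (d * real n) \<le> L n" unfolding Lc using c by simp
    then show ?thesis by (simp add: exp_of_nat_mult[symmetric] algebra_simps)
  qed
  have summ: "summable (\<lambda>n. measure M (E n))"
  proof (rule summable_comparison_test'[where g = "\<lambda>n. exp (- (c * d)) ^ n"])
    show "summable (\<lambda>n. exp (- (c * d)) ^ n)" using c d by (intro summable_geometric) auto
    show "norm (measure M (E n)) \<le> exp (- (c * d)) ^ n" for n
      using EL[of n] bound[of n] by simp
  qed
  have "AE x in M. eventually (\<lambda>n. x \<in> space M - E n) sequentially"
    by (rule borel_cantelli_AE1) (use EL summ in \<open>auto simp: less_top[symmetric]\<close>)
  then show ?thesis
  proof (rule AE_mp[OF _ AE_I2], intro impI)
    fix \<omega> assume om: "\<omega> \<in> space M" and ev: "eventually (\<lambda>n. \<omega> \<in> space M - E n) sequentially"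
    then obtain n0 where n0: "\<forall>n\<ge>n0. \<omega> \<notin> E n" by (auto simp: eventually_sequentially)
    have ne: "N \<omega> \<inter> BX n \<noteq> {}" if "n \<ge> n0" for n
      using n0 that om unfolding E_def by auto
    define p where "p n = (SOME q. q \<in> N \<omega> \<inter> BX n)" for n
    have "\<forall>n\<ge>n0. p n \<in> N \<omega> \<inter> BX n"
      using ne unfolding p_def by (metis all_not_in_conv someI)
    then show "percolates (N \<omega>)" by (rule perc)
  qed
qed
end
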